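(* Let $\mathbf{u}$ be a Sturmian word with parameters $(\ell_0,\ell_1,\rho)$ which is fixed by a primitive morphism $\varphi_w$, $w\in\{a,b,\alpha,\beta\}^*$. (1) If $w \in \{b,\beta\}^*$, then $\rho = \ell_1$. (2) If $w \in \{b,\alpha\}^*$, then $\rho = 0$. (3) If $w \in \{a,\beta\}^*$, then $\rho = \ell_0+\ell_1$. (4) If $w \in \{a,\alpha\}^*$, then $\rho = \ell_0$.
   Context: Morphisms on $\{0,1\}^*$: $\varphi_a: 0\mapsto 0, 1 \mapsto 10$; $\varphi_b: 0 \mapsto 0, 1\mapsto 01$; $\varphi_\alpha: 0\mapsto 01, 1\mapsto 1$; $\varphi_\beta: 0\mapsto 10, 1 \mapsto 1$; for $w=w_0\cdots w_{m-1}$, $\varphi_w = \varphi_{w_0}\circ\cdots\circ\varphi_{w_{m-1}}$. A morphism is primitive if some power maps every letter to a word containing every letter. Two interval exchange words: given $\ell_0,\ell_1>0$, take either $I=[0,\ell_0+\ell_1)$, $I_0=[0,\ell_0)$, $I_1=[\ell_0,\ell_0+\ell_1)$ (lower case) or $I=(0,\ell_0+\ell_1]$, $I_0=(0,\ell_0]$, $I_1=(\ell_0,\ell_0+\ell_1]$ (upper case); $T(x)=x+\ell_1$ on $I_0$, $T(x)=x-\ell_0$ on $I_1$; for $\rho\in I$, $u_n = 0$ if $T^n(\rho)\in I_0$ and $u_n=1$ otherwise. With $\ell_1/(\ell_0+\ell_1)$ irrational these are the Sturmian words; "Sturmian word with parameters $(\ell_0,\ell_1,\rho)$" means such a lower or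 upper coding. *)

theory Defs
  imports Complex_Main
begin

text \<open>Letters are the naturals 0 and 1; finite words are nat lists; infinite words are
  functions nat \<Rightarrow> nat. A morphism is given by the images of the letters.\<close>

type_synonym morph = "nat \<Rightarrow> nat list"

definition morph_list :: "morph \<Rightarrow> nat list \<Rightarrow> nat list" where
  "morph_list \<phi> xs = concat (map \<phi> xs)"

datatype gen = Ga | Gb | Galpha | Gbeta

definition phi_gen :: "gen \<Rightarrow> morph" where
  "phi_gen g x = (case g of
      Ga \<Rightarrow> (if x = 0 then [0] else [1,0])
    | Gb \<Rightarrow> (if x = 0 then [0] else [0,1])
    | Galpha \<Rightarrow> (if x = 0 then [0,1] else [1])
    | Gbeta \<Rightarrow> (if x = 0 then [1,0] else [1]))"

fun phi_word :: "gen list \<Rightarrow> morph" where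
  "phi_word [] = (\<lambda>x. [x])"
| "phi_word (g # ws) = (\<lambda>x. morph_list (phi_gen g) (phi_word ws x))"

definition primitive :: "morph \<Rightarrow> bool" where
  "primitive \<phi> \<longleftrightarrow> (\<exists>k\<ge>1. \<forall>x\<in>{0::nat,1}. \<forall>y\<in>{0::nat,1}.
      y \<in> set ((morph_list \<phi> ^^ k) [x]))"

definition fixed_by :: "morph \<Rightarrow> (nat \<Rightarrow> nat) \<Rightarrow> bool" where
  "fixed_by \<phi> u \<longleftrightarrow> (\<forall>n i. i < length (morph_list \<phi> (map u [0..<n])) \<longrightarrow>
      morph_list \<phi> (map u [0..<n]) ! i = u i)"

definition T_lower :: "real \<Rightarrow> real \<Rightarrow> real \<Rightarrow> real" where
  "T_lower l0 l1 x = (if x < l0 then x + l1 else x - l0)"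

definition T_upper :: "real \<Rightarrow> real \<Rightarrow> real \<Rightarrow> real" where
  "T_upper l0 l1 x = (if x \<le> l0 then x + l1 else x - l0)"

definition lower_coding :: "real \<Rightarrow> real \<Rightarrow> real \<Rightarrow> nat \<Rightarrow> nat" where
  "lower_coding l0 l1 \<rho> n = (if (T_lower l0 l1 ^^ n) \<rho> < l0 then 0 else 1)"

definition upper_coding :: "real \<Rightarrow> real \<Rightarrow> real \<Rightarrow> nat \<Rightarrow> nat" where
  "upper_coding l0 l1 \<rho> n = (if (T_upper l0 l1 ^^ n) \<rho> \<le> l0 then 0 else 1)"

definition sturmian :: "(nat \<Rightarrow> nat) \<Rightarrow> real \<Rightarrow> real \<Rightarrow> real \<Rightarrow> bool" where
  "sturmian u l0 l1 \<rho> \<longleftrightarrow> l0 > 0 \<and> l1 > 0 \<and> l1 / (l0 + l1) \<notin> \<rat> \<and>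
     ((0 \<le> \<rho> \<and> \<rho> < l0 + l1 \<and> u = lower_coding l0 l1 \<rho>) \<or>
      (0 < \<rho> \<and> \<rho> \<le> l0 + l1 \<and> u = upper_coding l0 l1 \<rho>))"

end

theory Submission
  imports Defs "HOL-Analysis.Kronecker_Approximation_Theorem"
begin

definition inI0 :: "bool \<Rightarrow> real \<Rightarrow> real \<Rightarrow> bool" where
  "inI0 up l0 x = (if up then x \<le> l0 else x < l0)"

definition TT :: "bool \<Rightarrow> real \<Rightarrow> real \<Rightarrow> real \<Rightarrow> real" where
  "TT up l0 l1 x = (if inI0 up l0 x then x + l1 else x - l0)"

definition lt :: "bool \<Rightarrow> real \<Rightarrow> real \<Rightarrow> nat" where
  "lt up l0 x = (if inI0 up l0 x then 0 else 1)"

definition cod :: "bool \<Rightarrow> real \<Rightarrow> real \<Rightarrow> real \<Rightarrow> nat \<Rightarrow> nat" where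
  "cod up l0 l1 r n = lt up l0 ((TT up l0 l1 ^^ n) r)"

definition inI :: "bool \<Rightarrow> real \<Rightarrow> real \<Rightarrow> bool" where
  "inI up L x = (if up then 0 < x \<and> x \<le> L else 0 \<le> x \<and> x < L)"

lemma TT_lower: "TT False = T_lower"
  by (intro ext) (simp add: TT_def T_lower_def inI0_def)
lemma TT_upper: "TT True = T_upper"
  by (intro ext) (simp add: TT_def T_upper_def inI0_def)
lemma cod_lower: "cod False = lower_coding"
  by (intro ext) (simp add: cod_def lt_def lower_coding_def TT_lower inI0_def)
lemma cod_upper: "cod True = upper_coding"
  by (intro ext) (simp add: cod_def lt_def upper_coding_def TT_upper inI0_def)

lemma TT_inI: "0 < l0 \<Longrightarrow> 0 < l1 \<Longrightarrow> inI up (l0+l1) y \<Longrightarrow> inI up (l0+l1) (TT up l0 l1 y)"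
  by (auto simp: inI_def TT_def inI0_def split: if_splits)

lemma TT_pow_inI: "0 < l0 \<Longrightarrow> 0 < l1 \<Longrightarrow> inI up (l0+l1) y \<Longrightarrow> inI up (l0+l1) ((TT up l0 l1 ^^ n) y)"
  by (induction n) (auto intro: TT_inI)

definition nl0 :: "gen \<Rightarrow> real \<Rightarrow> real \<Rightarrow> real" where
  "nl0 g a b = (case g of Ga \<Rightarrow> a + b | Gb \<Rightarrow> a + b | Galpha \<Rightarrow> a | Gbeta \<Rightarrow> a)"
definition nl1 :: "gen \<Rightarrow> real \<Rightarrow> real \<Rightarrow> real" where
  "nl1 g a b = (case g of Ga \<Rightarrow> b | Gb \<Rightarrow> b | Galpha \<Rightarrow> a + b | Gbeta \<Rightarrow> a + b)"
definition sh :: "gen \<Rightarrow> real \<Rightarrow> real \<Rightarrow> real" where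
  "sh g a b = (case g of Ga \<Rightarrow> b | Gb \<Rightarrow> 0 | Galpha \<Rightarrow> 0 | Gbeta \<Rightarrow> a)"

lemma point:
  fixes g :: gen
  assumes "0 < l0" "0 < l1" "inI up (l0+l1) y"
  defines "a \<equiv> nl0 g l0 l1" and "b \<equiv> nl1 g l0 l1" and "s \<equiv> sh g l0 l1"
  shows "phi_gen g (lt up l0 y) = map (\<lambda>i. lt up a ((TT up a b ^^ i) (y + s))) [0..<length (phi_gen g (lt up l0 y))]
     \<and> (TT up a b ^^ length (phi_gen g (lt up l0 y))) (y + s) = TT up l0 l1 y + s"
  using assms(1-3) unfolding a_def b_def s_def
  by (cases g; cases up; auto simp: phi_gen_def lt_def TT_def inI0_def inI_def nl0_def nl1_def sh_def numeral_2_eq_2 upt_rec)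

lemma morph_list_append[simp]: "morph_list f (xs @ ys) = morph_list f xs @ morph_list f ys"
  by (simp add: morph_list_def)
lemma morph_list_Nil[simp]: "morph_list f [] = []"
  by (simp add: morph_list_def)
lemma morph_list_single[simp]: "morph_list f [x] = f x"
  by (simp add: morph_list_def)

lemma phi_gen_ne: "phi_gen g x \<noteq> []"
  by (cases g) (auto simp: phi_gen_def)

definition valid :: "bool \<Rightarrow> real \<Rightarrow> real \<Rightarrow> real \<Rightarrow> bool" where
  "valid up a b r \<longleftrightarrow> 0 < a \<and> 0 < b \<and> inI up (a+b) r"

lemma valid_trans: "valid up l0 l1 r \<Longrightarrow> valid up (nl0 g l0 l1) (nl1 g l0 l1) (r + sh g l0 l1)"
  by (cases g; cases up) (auto simp: valid_def nl0_def nl1_def sh_def inI_def)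

lemma map_upt_add: "map f [m..<m+k] = map (\<lambda>i. f (m+i)) [0..<k]"
  by (induction k) auto

lemma gen_prefix:
  fixes g :: gen
  assumes v: "valid up l0 l1 r"
  defines "a \<equiv> nl0 g l0 l1" and "b \<equiv> nl1 g l0 l1" and "s \<equiv> sh g l0 l1"
  shows "\<exists>m\<ge>n. morph_list (phi_gen g) (map (cod up l0 l1 r) [0..<n]) = map (cod up a b (r+s)) [0..<m]
     \<and> (TT up a b ^^ m) (r+s) = (TT up l0 l1 ^^ n) r + s"
proof (induction n)
  case 0
  then show ?case by simp
next
  case (Suc n)
  then obtain m where m: "m \<ge> n" "morph_list (phi_gen g) (map (cod up l0 l1 r) [0..<n]) = map (cod up a b (r+s)) [0..<m]"
    "(TT up a b ^^ m) (r+s) = (TT up l0 l1 ^^ n) r + s" by blast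
  define y where "y = (TT up l0 l1 ^^ n) r"
  have yI: "inI up (l0+l1) y" using v TT_pow_inI unfolding y_def valid_def by blast
  define k where "k = length (phi_gen g (lt up l0 y))"
  have k1: "k \<ge> 1" using phi_gen_ne[of g] unfolding k_def by (simp add: Suc_le_eq)
  have pt: "phi_gen g (lt up l0 y) = map (\<lambda>i. lt up a ((TT up a b ^^ i) (y + s))) [0..<k]"
     "(TT up a b ^^ k) (y + s) = TT up l0 l1 y + s"
    using point[of l0 l1 up y g] v yI unfolding a_def b_def s_def k_def valid_def by auto
  have "map (cod up a b (r+s)) [m..<m+k] = map (\<lambda>i. lt up a ((TT up a b ^^ i) (y + s))) [0..<k]"
    unfolding map_upt_add cod_def
    by (simp add: funpow_add m(3)[folded y_def] add.commute)
  hence "morph_list (phi_gen g) (map (cod up l0 l1 r) [0..<Suc n]) = map (cod up a b (r+s)) [0..<m+k]"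
    using m(2) pt(1) by (simp add: cod_def y_def upt_add_eq_append[of 0 m k])
  moreover have "(TT up a b ^^ (m+k)) (r+s) = (TT up l0 l1 ^^ Suc n) r + s"
    using pt(2) m(3) by (simp add: funpow_add y_def add.commute)
  ultimately show ?case using m(1) k1 by (intro exI[of _ "m+k"]) auto
qed

fun transw :: "gen list \<Rightarrow> real \<times> real \<times> real \<Rightarrow> real \<times> real \<times> real" where
  "transw [] p = p"
| "transw (g # ws) p = (case transw ws p of (a, b, r) \<Rightarrow> (nl0 g a b, nl1 g a b, r + sh g a b))"

lemma morph_list_word_Cons:
  "morph_list (phi_word (g # ws)) xs = morph_list (phi_gen g) (morph_list (phi_word ws) xs)"
  by (induction xs) (auto simp: morph_list_def)

lemma morph_list_word_Nil[simp]: "morph_list (\<lambda>x. [x]) xs = xs"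
  by (induction xs) (auto simp: morph_list_def)

lemma word_prefix:
  assumes "valid up l0 l1 r"
  shows "transw ws (l0, l1, r) = (a, b, s) \<Longrightarrow> valid up a b s \<and>
    (\<forall>n. \<exists>m\<ge>n. morph_list (phi_word ws) (map (cod up l0 l1 r) [0..<n]) = map (cod up a b s) [0..<m])"
proof (induction ws arbitrary: a b s)
  case Nil
  then show ?case using assms by auto
next
  case (Cons g ws)
  obtain a' b' s' where t: "transw ws (l0, l1, r) = (a', b', s')" by (metis prod_cases3)
  with Cons.IH have IH: "valid up a' b' s'"
    "\<And>n. \<exists>m\<ge>n. morph_list (phi_word ws) (map (cod up l0 l1 r) [0..<n]) = map (cod up a' b' s') [0..<m]"
    by auto
  have abs: "a = nl0 g a' b'" "b = nl1 g a' b'" "s = s' + sh g a' b'" using Cons.prems t by auto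
  have "valid up a b s" using valid_trans[OF IH(1)] abs by simp
  moreover have "\<exists>m\<ge>n. morph_list (phi_word (g # ws)) (map (cod up l0 l1 r) [0..<n]) = map (cod up a b s) [0..<m]" for n
  proof -
    obtain m1 where m1: "m1 \<ge> n" "morph_list (phi_word ws) (map (cod up l0 l1 r) [0..<n]) = map (cod up a' b' s') [0..<m1]"
      using IH(2) by blast
    obtain m2 where m2: "m2 \<ge> m1" "morph_list (phi_gen g) (map (cod up a' b' s') [0..<m1]) = map (cod up a b s) [0..<m2]"
      using gen_prefix[OF IH(1), where g=g and n=m1] abs by blast
    have "morph_list (phi_word (g # ws)) (map (cod up l0 l1 r) [0..<n]) = map (cod up a b s) [0..<m2]"
      by (simp only: morph_list_word_Cons m1(2) m2(2))
    then show ?thesis using m1(1) m2(1) by (intro exI[of _ m2]) auto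
  qed
  ultimately show ?case by blast
qed

lemma count:
  "(TT up l0 l1 ^^ n) r = r + real n * l1 - (l0+l1) * (\<Sum>i<n. real (cod up l0 l1 r i))"
proof (induction n)
  case 0
  then show ?case by simp
next
  case (Suc n)
  have "(TT up l0 l1 ^^ Suc n) r = TT up l0 l1 ((TT up l0 l1 ^^ n) r)" by simp
  also have "\<dots> = (TT up l0 l1 ^^ n) r + l1 - (l0+l1) * real (cod up l0 l1 r n)"
    by (simp add: TT_def cod_def lt_def)
  finally have eq: "(TT up l0 l1 ^^ Suc n) r = (TT up l0 l1 ^^ n) r + l1 - (l0+l1) * real (cod up l0 l1 r n)" .
  show ?case unfolding eq Suc.IH by (simp add: algebra_simps)
qed

lemma density:
  fixes \<theta> x d :: real
  assumes "\<theta> \<notin> \<rat>" "0 < d"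
  shows "\<exists>n::nat. \<exists>k::int. 1 - d < x + real n * \<theta> - of_int k \<and> x + real n * \<theta> - of_int k < 1"
proof -
  define \<alpha> where "\<alpha> = frac (1 - d/2 - x)"
  have a: "0 \<le> \<alpha>" "\<alpha> \<le> 1" unfolding \<alpha>_def using frac_lt_1[of "1 - d/2 - x"] frac_ge_0[of "1 - d/2 - x"] by auto
  obtain n :: nat where n: "\<bar>frac (real n * \<theta>) - \<alpha>\<bar> < d/4"
    using Kronecker_approx_1_explicit[OF assms(1) a, of "d/4"] assms(2) by auto
  define k where "k = \<lfloor>real n * \<theta>\<rfloor> - \<lfloor>1 - d/2 - x\<rfloor>"
  have e1: "real n * \<theta> = of_int \<lfloor>real n * \<theta>\<rfloor> + frac (real n * \<theta>)" by (simp add: frac_def)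
  have e2: "1 - d/2 - x = of_int \<lfloor>1 - d/2 - x\<rfloor> + \<alpha>" by (simp add: frac_def \<alpha>_def)
  have eq: "x + real n * \<theta> - of_int k = 1 - d/2 + (frac (real n * \<theta>) - \<alpha>)"
    unfolding k_def using e1 e2 by simp
  have b: "- (d/4) < frac (real n * \<theta>) - \<alpha>" "frac (real n * \<theta>) - \<alpha> < d/4" using n unfolding abs_less_iff by linarith+
  have "1 - d < x + real n * \<theta> - of_int k \<and> x + real n * \<theta> - of_int k < 1"
    using eq b assms(2) by linarith
  then show ?thesis by blast
qed

lemma int_small: "\<bar>real_of_int z\<bar> < 1 \<Longrightarrow> z = 0"
  by linarith

lemma aux_contra:
  fixes \<theta> y d :: real and N :: "nat \<Rightarrow> nat"
  assumes "\<theta> \<notin> \<rat>" "0 < d"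
    and h: "\<And>n. inI up 1 (y + real n * \<theta> - real (N n)) \<and> inI up 1 (y + real n * \<theta> - real (N n) + d)"
  shows False
proof -
  obtain n :: nat and k :: int where nk: "1 - d < y + real n * \<theta> - of_int k" "y + real n * \<theta> - of_int k < 1"
    using density[OF assms(1,2), of y] by blast
  define g where "g = y + real n * \<theta> - real (N n)"
  have g: "inI up 1 g" "inI up 1 (g + d)" using h[of n] unfolding g_def by auto
  have "\<bar>real_of_int (k - int (N n))\<bar> < 1" using g nk unfolding g_def inI_def by (auto split: if_splits)
  hence "k = int (N n)" using int_small by fastforce
  hence "g > 1 - d" using nk unfolding g_def by simp
  thus False using g(2) unfolding inI_def by (auto split: if_splits)
qed

lemma inI_scale:
  assumes "(A::real) > 0" "inI up A (A * z)" shows "inI up 1 z"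
proof -
  have "A * z < A * 1 \<Longrightarrow> z < 1" "A * z \<le> A * 1 \<Longrightarrow> z \<le> 1"
    "0 < A * z \<Longrightarrow> 0 < z" "0 \<le> A * z \<Longrightarrow> 0 \<le> z"
    using assms(1) by (simp_all add: mult_less_cancel_left_pos mult_le_cancel_left_pos zero_less_mult_iff zero_le_mult_iff)
  then show ?thesis using assms(2) unfolding inI_def by (auto split: if_splits)
qed

lemma uniq:
  assumes va: "valid up a0 a1 r" and vb: "valid up b0 b1 s"
    and irr: "a1 / (a0+a1) \<notin> \<rat>"
    and eq: "\<And>i. cod up a0 a1 r i = cod up b0 b1 s i"
  shows "b1 * (a0+a1) = a1 * (b0+b1) \<and> s * (a0+a1) = r * (b0+b1)"
proof -
  define A where "A = a0 + a1"
  define B where "B = b0 + b1"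
  have A: "A > 0" and B: "B > 0" using va vb unfolding valid_def A_def B_def by auto
  define N where "N n = (\<Sum>i<n. cod up a0 a1 r i)" for n
  define \<theta> where "\<theta> = a1 / A"
  define \<theta>' where "\<theta>' = b1 / B"
  define x where "x = r / A"
  define x' where "x' = s / B"
  have fa: "inI up 1 (x + real n * \<theta> - real (N n))" for n
  proof -
    have "inI up A ((TT up a0 a1 ^^ n) r)" using TT_pow_inI va unfolding valid_def A_def by blast
    moreover have "(TT up a0 a1 ^^ n) r = A * (x + real n * \<theta> - real (N n))"
    proof -
      have Ax: "A * x = r" and At: "A * \<theta> = a1" using A unfolding x_def \<theta>_def by auto
      have "(TT up a0 a1 ^^ n) r = r + real n * a1 - A * real (N n)"
        using count[of n up a0 a1 r] unfolding N_def A_def by (simp add: of_nat_sum)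
      also have "\<dots> = A * x + real n * (A * \<theta>) - A * real (N n)" by (simp add: Ax At)
      also have "\<dots> = A * (x + real n * \<theta> - real (N n))" by (simp add: algebra_simps)
      finally show ?thesis .
    qed
    ultimately show ?thesis using A inI_scale by metis
  qed
  have fb: "inI up 1 (x' + real n * \<theta>' - real (N n))" for n
  proof -
    have "inI up B ((TT up b0 b1 ^^ n) s)" using TT_pow_inI vb unfolding valid_def B_def by blast
    moreover have "(TT up b0 b1 ^^ n) s = B * (x' + real n * \<theta>' - real (N n))"
    proof -
      have Ax: "B * x' = s" and At: "B * \<theta>' = b1" using B unfolding x'_def \<theta>'_def by auto
      have "(TT up b0 b1 ^^ n) s = s + real n * b1 - B * real (N n)"
        using count[of n up b0 b1 s] unfolding N_def B_def by (simp add: of_nat_sum eq)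
      also have "\<dots> = B * x' + real n * (B * \<theta>') - B * real (N n)" by (simp add: Ax At)
      also have "\<dots> = B * (x' + real n * \<theta>' - real (N n))" by (simp add: algebra_simps)
      finally show ?thesis .
    qed
    ultimately show ?thesis using B inI_scale by metis
  qed
  have diff: "\<bar>(x - x') + real n * (\<theta> - \<theta>')\<bar> < 1" for n
    using fa[of n] fb[of n] unfolding inI_def by (auto split: if_splits simp: algebra_simps)
  have th: "\<theta> = \<theta>'"
  proof (rule ccontr)
    assume ne: "\<theta> \<noteq> \<theta>'"
    hence pos: "\<bar>\<theta> - \<theta>'\<bar> > 0" by simp
    obtain n :: nat where n: "2 / \<bar>\<theta> - \<theta>'\<bar> < real n" using reals_Archimedean2 by blast
    hence "2 < real n * \<bar>\<theta> - \<theta>'\<bar>" using pos by (simp add: field_simps)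
    moreover have "\<bar>x - x'\<bar> < 1" using diff[of 0] by simp
    moreover have "\<bar>real n * (\<theta> - \<theta>')\<bar> = real n * \<bar>\<theta> - \<theta>'\<bar>" by (simp add: abs_mult)
    ultimately show False using diff[of n] by linarith
  qed
  have irr': "\<theta> \<notin> \<rat>" using irr unfolding \<theta>_def A_def .
  have xx: "x = x'"
  proof (rule ccontr)
    assume "x \<noteq> x'"
    then consider "x < x'" | "x' < x" by linarith
    then show False
    proof cases
      case 1
      show False
      proof (rule aux_contra[OF irr', of "x' - x" up x N])
        fix n
        have "x + real n * \<theta> - real (N n) + (x' - x) = x' + real n * \<theta>' - real (N n)" using th by simp
        then show "inI up 1 (x + real n * \<theta> - real (N n)) \<and> inI up 1 (x + real n * \<theta> - real (N n) + (x' - x))"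
          using fa fb by metis
      qed (use 1 in auto)
    next
      case 2
      show False
      proof (rule aux_contra[OF irr', of "x - x'" up x' N])
        fix n
        have "x' + real n * \<theta> - real (N n) + (x - x') = x + real n * \<theta> - real (N n)" using th by simp
        then show "inI up 1 (x' + real n * \<theta> - real (N n)) \<and> inI up 1 (x' + real n * \<theta> - real (N n) + (x - x'))"
          using fa fb th by metis
      qed (use 2 in auto)
    qed
  qed
  show ?thesis using th xx A B unfolding \<theta>_def \<theta>'_def x_def x'_def A_def B_def
    by (auto simp: field_simps)
qed

lemma transw_grow:
  "0 < l0 \<Longrightarrow> 0 < l1 \<Longrightarrow> transw ws (l0, l1, r) = (a, b, s) \<Longrightarrow>
    0 < a \<and> 0 < b \<and> l0 + l1 \<le> a + b \<and> (ws \<noteq> [] \<longrightarrow> l0 + l1 < a + b)"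
proof (induction ws arbitrary: a b s)
  case Nil then show ?case by auto
next
  case (Cons g ws)
  obtain a' b' s' where t: "transw ws (l0, l1, r) = (a', b', s')" by (metis prod_cases3)
  with Cons have IH: "0 < a'" "0 < b'" "l0 + l1 \<le> a' + b'" by auto
  have abs: "a = nl0 g a' b'" "b = nl1 g a' b'" using Cons.prems t by auto
  show ?case using IH abs by (cases g) (auto simp: nl0_def nl1_def)
qed

lemma transw_inv:
  assumes "transw ws (l0, l1, r) = (a, b, s)"
  shows "(set ws \<subseteq> {Gb, Gbeta} \<longrightarrow> s - b = r - l1)
       \<and> (set ws \<subseteq> {Gb, Galpha} \<longrightarrow> s = r)
       \<and> (set ws \<subseteq> {Ga, Gbeta} \<longrightarrow> s - (a + b) = r - (l0 + l1))
       \<and> (set ws \<subseteq> {Ga, Galpha} \<longrightarrow> s - a = r - l0)"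
  using assms
proof (induction ws arbitrary: a b s)
  case Nil then show ?case by auto
next
  case (Cons g ws)
  obtain a' b' s' where t: "transw ws (l0, l1, r) = (a', b', s')" by (metis prod_cases3)
  with Cons have IH: "(set ws \<subseteq> {Gb, Gbeta} \<longrightarrow> s' - b' = r - l1)
       \<and> (set ws \<subseteq> {Gb, Galpha} \<longrightarrow> s' = r)
       \<and> (set ws \<subseteq> {Ga, Gbeta} \<longrightarrow> s' - (a' + b') = r - (l0 + l1))
       \<and> (set ws \<subseteq> {Ga, Galpha} \<longrightarrow> s' - a' = r - l0)" by auto
  have abs: "a = nl0 g a' b'" "b = nl1 g a' b'" "s = s' + sh g a' b'" using Cons.prems t by auto
  show ?case using IH abs by (cases g) (auto simp: nl0_def nl1_def sh_def)
qed

lemma not_prim_Nil: "\<not> primitive (phi_word [])"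
proof
  assume "primitive (phi_word [])"
  then obtain k where "\<forall>x\<in>{0::nat,1}. \<forall>y\<in>{0::nat,1}. y \<in> set ((morph_list (phi_word []) ^^ k) [x])"
    unfolding primitive_def by blast
  moreover have "(morph_list (phi_word []) ^^ k) xs = xs" for xs
    by (induction k) auto
  ultimately show False by auto
qed

theorem lemma21:
  fixes u :: "nat \<Rightarrow> nat" and l0 l1 \<rho> :: real and w :: "gen list"
  assumes "sturmian u l0 l1 \<rho>"
    and "primitive (phi_word w)"
    and "fixed_by (phi_word w) u"
  shows "(set w \<subseteq> {Gb, Gbeta} \<longrightarrow> \<rho> = l1)
       \<and> (set w \<subseteq> {Gb, Galpha} \<longrightarrow> \<rho> = 0)
       \<and> (set w \<subseteq> {Ga, Gbeta} \<longrightarrow> \<rho> = l0 + l1)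
       \<and> (set w \<subseteq> {Ga, Galpha} \<longrightarrow> \<rho> = l0)"
proof -
  have wne: "w \<noteq> []" using assms(2) not_prim_Nil by blast
  have irr: "l1 / (l0 + l1) \<notin> \<rat>" using assms(1) unfolding sturmian_def by blast
  obtain up where v: "valid up l0 l1 \<rho>" and ueq: "u = cod up l0 l1 \<rho>"
  proof (cases "0 \<le> \<rho> \<and> \<rho> < l0 + l1 \<and> u = lower_coding l0 l1 \<rho>")
    case True
    then show ?thesis using that[of False] assms(1) unfolding sturmian_def valid_def inI_def cod_lower by auto
  next
    case False
    then show ?thesis using that[of True] assms(1) unfolding sturmian_def valid_def inI_def cod_upper by auto
  qed
  obtain a b s where t: "transw w (l0, l1, \<rho>) = (a, b, s)" by (metis prod_cases3)
  from word_prefix[OF v t] have vb: "valid up a b s" and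
    pre: "\<And>n. \<exists>m\<ge>n. morph_list (phi_word w) (map (cod up l0 l1 \<rho>) [0..<n]) = map (cod up a b s) [0..<m]"
    by auto
  have same: "cod up l0 l1 \<rho> i = cod up a b s i" for i
  proof -
    obtain m where m: "m \<ge> Suc i" "morph_list (phi_word w) (map u [0..<Suc i]) = map (cod up a b s) [0..<m]"
      using pre[of "Suc i"] ueq by blast
    have "i < length (morph_list (phi_word w) (map u [0..<Suc i]))" using m by simp
    hence "morph_list (phi_word w) (map u [0..<Suc i]) ! i = u i"
      using assms(3) unfolding fixed_by_def by blast
    then show ?thesis using m ueq by simp
  qed
  have U: "b * (l0 + l1) = l1 * (a + b)" "s * (l0 + l1) = \<rho> * (a + b)"
    using uniq[OF v vb irr same] by auto
  have pos: "0 < l0" "0 < l1" using v unfolding valid_def by auto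
  have gr: "l0 + l1 < a + b" using transw_grow[OF pos t] wne by auto
  have U2: "a * (l0 + l1) = l0 * (a + b)" using U(1) by (simp add: algebra_simps)
  have I: "(set w \<subseteq> {Gb, Gbeta} \<longrightarrow> s - b = \<rho> - l1)
       \<and> (set w \<subseteq> {Gb, Galpha} \<longrightarrow> s = \<rho>)
       \<and> (set w \<subseteq> {Ga, Gbeta} \<longrightarrow> s - (a + b) = \<rho> - (l0 + l1))
       \<and> (set w \<subseteq> {Ga, Galpha} \<longrightarrow> s - a = \<rho> - l0)" using transw_inv[OF t] .
  have key: "(\<rho> - E) * (a + b) = (\<rho> - E) * (l0 + l1) \<Longrightarrow> \<rho> = E" for E
  proof -
    assume "(\<rho> - E) * (a + b) = (\<rho> - E) * (l0 + l1)"
    hence "(\<rho> - E) * ((a + b) - (l0 + l1)) = 0" by (simp add: algebra_simps)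
    thus "\<rho> = E" using gr by simp
  qed
  have c1: "\<rho> = l1" if h: "s - b = \<rho> - l1"
  proof (rule key)
    have "(s - b) * (l0 + l1) = (\<rho> - l1) * (l0 + l1)" using h by simp
    thus "(\<rho> - l1) * (a + b) = (\<rho> - l1) * (l0 + l1)" using U by (simp add: algebra_simps)
  qed
  have c2: "\<rho> = 0" if h: "s = \<rho>"
  proof (rule key)
    show "(\<rho> - 0) * (a + b) = (\<rho> - 0) * (l0 + l1)" using h U by (simp add: algebra_simps)
  qed
  have c3: "\<rho> = l0 + l1" if h: "s - (a + b) = \<rho> - (l0 + l1)"
  proof (rule key)
    have "(s - (a + b)) * (l0 + l1) = (\<rho> - (l0 + l1)) * (l0 + l1)" using h by simp
    thus "(\<rho> - (l0 + l1)) * (a + b) = (\<rho> - (l0 + l1)) * (l0 + l1)" using U by (simp add: algebra_simps)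
  qed
  have c4: "\<rho> = l0" if h: "s - a = \<rho> - l0"
  proof (rule key)
    have "(s - a) * (l0 + l1) = (\<rho> - l0) * (l0 + l1)" using h by simp
    thus "(\<rho> - l0) * (a + b) = (\<rho> - l0) * (l0 + l1)" using U U2 by (simp add: algebra_simps)
  qed
  show ?thesis using I c1 c2 c3 c4 by blast
qed

end
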